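(* Let $m$ and $n$ be positive integers with $m$ odd. Then there exists a $\Delta$-permutation $\psi$ of the group $\mathbb{Z}_m\times\mathbb{Z}_{2n}$ such that (1) $\Delta=[(0,0)]\cup[\gamma \mid \gamma\in\mathbb{Z}_m\times\mathbb{Z}_{2n},\ \gamma\neq(0,n)]$ (that is, $\Delta$ contains $(0,0)$ twice and every other element of $\mathbb{Z}_m\times\mathbb{Z}_{2n}$ except $(0,n)$ exactly once), and (2) $\psi$ fixes $(0,0)$ and $\left(-\frac{m-1}{2},\ \left\lfloor\frac{n+1}{2}\right\rfloor+\frac{m-1}{2}n\right)$.
   Context: A list is a multiset; a $v$-list of a group is a multiset of $v$ (not necessarily distinct) elements of the group. Given a group $\Gamma$ (written additively) of order $v$ and a $v$-list $\Delta$ of $\Gamma$, a permutation $\varphi$ of $\Gamma$ is a $\Delta$-permutation if the multiset $[\varphi(a)-a \mid a\in\Gamma]$ equals $\Delta$. *)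

theory Defs
  imports Main "HOL-Library.Multiset"
begin

definition grp :: "int \<Rightarrow> int \<Rightarrow> (int \<times> int) set" where
  "grp m n = {0..<m} \<times> {0..<2*n}"

definition gsub :: "int \<Rightarrow> int \<Rightarrow> int \<times> int \<Rightarrow> int \<times> int \<Rightarrow> int \<times> int" where
  "gsub m n x y = ((fst x - fst y) mod m, (snd x - snd y) mod (2*n))"

definition is_delta_perm ::
  "int \<Rightarrow> int \<Rightarrow> (int \<times> int) multiset \<Rightarrow> (int \<times> int \<Rightarrow> int \<times> int) \<Rightarrow> bool" where
  "is_delta_perm m n \<Delta> \<phi> \<longleftrightarrow>
     bij_betw \<phi> (grp m n) (grp m n) \<and>
     image_mset (\<lambda>a. gsub m n (\<phi> a) a) (mset_set (grp m n)) = \<Delta>"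

end

theory Submission
  imports Defs
begin

lemma mod_eq_small:
  fixes a b N :: int
  assumes "N > 0" "a mod N = b mod N" "\<bar>a - b\<bar> < N"
  shows "a = b"
proof -
  have "N dvd a - b" using assms(2) by (simp add: mod_eq_dvd_iff)
  then obtain q where q: "a - b = N * q" by (auto simp: dvd_def)
  have "N * \<bar>q\<bar> < N * 1" using assms(3) q assms(1) by (simp add: abs_mult)
  hence "\<bar>q\<bar> < 1" using assms(1) by (simp only: mult_less_cancel_left_pos)
  hence "q = 0" by simp
  thus ?thesis using q by simp
qed

lemma odd_dvd_2:
  fixes m c :: int
  assumes "odd m" "m dvd 2*c"
  shows "m dvd c"
proof -
  obtain j where j: "m = 2*j+1" using assms(1) by (metis oddE)
  have "c = (j+1)*(2*c) - c*m" using j by (simp add: algebra_simps)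
  moreover have "m dvd (j+1)*(2*c) - c*m" using assms(2) by (simp add: dvd_diff)
  ultimately show ?thesis by simp
qed

lemma cancel2_mod:
  fixes m a b :: int
  assumes "odd m" "(2*a) mod m = (2*b) mod m"
  shows "a mod m = b mod m"
proof -
  have "m dvd 2*a - 2*b" using assms(2) by (simp add: mod_eq_dvd_iff)
  hence "m dvd 2*(a-b)" by (simp add: algebra_simps)
  hence "m dvd a - b" using odd_dvd_2 assms(1) by blast
  thus ?thesis by (simp add: mod_eq_dvd_iff)
qed

definition goodrho :: "int \<Rightarrow> int \<Rightarrow> (int \<Rightarrow> int) \<Rightarrow> bool" where
  "goodrho n s \<rho> \<longleftrightarrow> s \<in> {1..<2*n} \<and> (\<forall>y\<in>{0..<2*n}. \<rho> y \<in> {0..<2*n}) \<and>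
     inj_on \<rho> {0..<2*n} \<and> \<rho> 0 = 0 \<and> \<rho> s = s \<and>
     inj_on (\<lambda>y. (\<rho> y - y) mod (2*n)) ({0..<2*n} - {s}) \<and>
     (\<forall>y\<in>{0..<2*n}. (\<rho> y - y) mod (2*n) \<noteq> n)"

lemma goodrho_intro:
  fixes n s :: int and \<rho> :: "int \<Rightarrow> int"
  assumes n: "n > 0" and s: "s \<in> {1..<2*n}"
    and rng: "\<And>y. y \<in> {0..<2*n} \<Longrightarrow> \<rho> y \<in> {0..<2*n}"
    and inj: "\<And>y1 y2. y1 \<in> {0..<2*n} \<Longrightarrow> y2 \<in> {0..<2*n} \<Longrightarrow> \<rho> y1 = \<rho> y2 \<Longrightarrow> y1 = y2"
    and f0: "\<rho> 0 = 0" and fs: "\<rho> s = s"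
    and drng: "\<And>y. y \<in> {0..<2*n} \<Longrightarrow> 1 - n \<le> \<rho> y - y \<and> \<rho> y - y \<le> n - 1"
    and dinj: "\<And>y1 y2. y1 \<in> {0..<2*n} \<Longrightarrow> y2 \<in> {0..<2*n} \<Longrightarrow> y1 \<noteq> s \<Longrightarrow> y2 \<noteq> s \<Longrightarrow>
                 \<rho> y1 - y1 = \<rho> y2 - y2 \<Longrightarrow> y1 = y2"
  shows "goodrho n s \<rho>"
  unfolding goodrho_def
proof (intro conjI ballI)
  show "s \<in> {1..<2*n}" by fact
  show "\<And>y. y \<in> {0..<2*n} \<Longrightarrow> \<rho> y \<in> {0..<2*n}" by (rule rng)
  show "inj_on \<rho> {0..<2*n}" using inj by (auto simp: inj_on_def)
  show "\<rho> 0 = 0" "\<rho> s = s" by fact+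
  show "inj_on (\<lambda>y. (\<rho> y - y) mod (2*n)) ({0..<2*n} - {s})"
  proof (rule inj_onI)
    fix y1 y2 assume a: "y1 \<in> {0..<2*n} - {s}" "y2 \<in> {0..<2*n} - {s}"
      "(\<rho> y1 - y1) mod (2*n) = (\<rho> y2 - y2) mod (2*n)"
    have "\<rho> y1 - y1 = \<rho> y2 - y2"
      apply (rule mod_eq_small[OF _ a(3)]) using n drng[of y1] drng[of y2] a by auto
    thus "y1 = y2" using dinj a by auto
  qed
  fix y assume y: "y \<in> {0..<2*n}"
  define d where "d = \<rho> y - y"
  have dr: "1 - n \<le> d" "d \<le> n - 1" using drng[OF y] d_def by auto
  show "(\<rho> y - y) mod (2*n) \<noteq> n"
  proof (cases "d \<ge> 0")
    case True
    hence "d mod (2*n) = d" using dr n by (intro mod_pos_pos_trivial) auto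
    thus ?thesis using dr d_def by auto
  next
    case False
    have "d mod (2*n) = (d + 2*n) mod (2*n)" by simp
    also have "\<dots> = d + 2*n" using dr n False by (intro mod_pos_pos_trivial) auto
    finally show ?thesis using dr d_def by auto
  qed
qed

definition rhoR :: "int \<Rightarrow> int \<Rightarrow> int \<Rightarrow> int" where
  "rhoR n s0 y = (if y = 0 then 0 else if y < 2*s0 then 2*s0 - y else 2*s0 - 1 + 2*n - y)"

lemma goodrho_R:
  fixes n s0 :: int
  assumes "n \<ge> 2" "n \<le> 2*s0" "2*s0 \<le> n+1"
  shows "goodrho n s0 (rhoR n s0)"
proof (rule goodrho_intro)
  show "n > 0" using assms by simp
  show "s0 \<in> {1..<2*n}" using assms by simp
  show "\<And>y. y \<in> {0..<2*n} \<Longrightarrow> rhoR n s0 y \<in> {0..<2*n}"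
    using assms by (auto simp: rhoR_def)
  show "\<And>y1 y2. y1 \<in> {0..<2*n} \<Longrightarrow> y2 \<in> {0..<2*n} \<Longrightarrow> rhoR n s0 y1 = rhoR n s0 y2 \<Longrightarrow> y1 = y2"
    using assms by (auto simp: rhoR_def split: if_splits)
  show "rhoR n s0 0 = 0" by (simp add: rhoR_def)
  show "rhoR n s0 s0 = s0" using assms by (simp add: rhoR_def)
  show "\<And>y. y \<in> {0..<2*n} \<Longrightarrow> 1 - n \<le> rhoR n s0 y - y \<and> rhoR n s0 y - y \<le> n - 1"
    using assms by (auto simp: rhoR_def)
  show "\<And>y1 y2. y1 \<in> {0..<2*n} \<Longrightarrow> y2 \<in> {0..<2*n} \<Longrightarrow> y1 \<noteq> s0 \<Longrightarrow> y2 \<noteq> s0 \<Longrightarrow>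
                 rhoR n s0 y1 - y1 = rhoR n s0 y2 - y2 \<Longrightarrow> y1 = y2"
    using assms unfolding rhoR_def by (auto split: if_splits; presburger)
qed

definition rhoT :: "int \<Rightarrow> int \<Rightarrow> int" where
  "rhoT t y = (if y = 0 then 0 else if y \<le> 2*t - 1 then 2*t - y else if y = 2*t+1 then 4*t+1
     else if y = 4*t then 2*t else if even y then 6*t - 1 - y else 6*t + 3 - y)"

lemma goodrho_T:
  fixes t :: int
  assumes "t \<ge> 1"
  shows "goodrho (2*t+1) t (rhoT t)"
proof (rule goodrho_intro)
  show "2*t+1 > 0" using assms by simp
  show "t \<in> {1..<2*(2*t+1)}" using assms by simp
  show "\<And>y. y \<in> {0..<2*(2*t+1)} \<Longrightarrow> rhoT t y \<in> {0..<2*(2*t+1)}"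
    using assms unfolding rhoT_def by (auto split: if_splits; presburger)
  show "\<And>y1 y2. y1 \<in> {0..<2*(2*t+1)} \<Longrightarrow> y2 \<in> {0..<2*(2*t+1)} \<Longrightarrow> rhoT t y1 = rhoT t y2 \<Longrightarrow> y1 = y2"
    using assms unfolding rhoT_def by (auto split: if_splits; presburger)
  show "rhoT t 0 = 0" by (simp add: rhoT_def)
  show "rhoT t t = t" using assms by (simp add: rhoT_def)
  show "\<And>y. y \<in> {0..<2*(2*t+1)} \<Longrightarrow> 1 - (2*t+1) \<le> rhoT t y - y \<and> rhoT t y - y \<le> (2*t+1) - 1"
    using assms unfolding rhoT_def by (auto split: if_splits; presburger)
  show "\<And>y1 y2. y1 \<in> {0..<2*(2*t+1)} \<Longrightarrow> y2 \<in> {0..<2*(2*t+1)} \<Longrightarrow> y1 \<noteq> t \<Longrightarrow> y2 \<noteq> t \<Longrightarrow>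
                 rhoT t y1 - y1 = rhoT t y2 - y2 \<Longrightarrow> y1 = y2"
    using assms unfolding rhoT_def by (auto split: if_splits; presburger)
qed

lemma goodrhoD:
  assumes "goodrho n s \<rho>"
  shows "s \<in> {1..<2*n}" "\<And>y. y \<in> {0..<2*n} \<Longrightarrow> \<rho> y \<in> {0..<2*n}"
     "inj_on \<rho> {0..<2*n}" "\<rho> 0 = 0" "\<rho> s = s"
     "inj_on (\<lambda>y. (\<rho> y - y) mod (2*n)) ({0..<2*n} - {s})"
     "\<And>y. y\<in>{0..<2*n} \<Longrightarrow> (\<rho> y - y) mod (2*n) \<noteq> n"
  using assms unfolding goodrho_def by auto

lemma goodrho_inj0:
  assumes g: "goodrho n s \<rho>"
  shows "inj_on (\<lambda>y. (\<rho> y - y) mod (2*n)) ({0..<2*n} - {0})"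
proof (rule inj_onI)
  note G = goodrhoD[OF g]
  fix y1 y2 assume a: "y1 \<in> {0..<2*n} - {0}" "y2 \<in> {0..<2*n} - {0}"
    "(\<rho> y1 - y1) mod (2*n) = (\<rho> y2 - y2) mod (2*n)"
  have n: "n > 0" using G(1) by auto
  have s0: "s \<noteq> 0" "s \<in> {0..<2*n}" using G(1) by auto
  have d0: "(\<rho> 0 - 0) mod (2*n) = 0" using G(4) by simp
  have ds: "(\<rho> s - s) mod (2*n) = 0" using G(5) by simp
  show "y1 = y2"
  proof (cases "y1 = s \<or> y2 = s")
    case False
    thus ?thesis using G(6) a unfolding inj_on_def by blast
  next
    case True
    show ?thesis
    proof (rule ccontr)
      assume ne: "y1 \<noteq> y2"
      then obtain z where z: "z \<in> {0..<2*n} - {0}" "z \<noteq> s" "(\<rho> z - z) mod (2*n) = 0"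
        using True a ds by (metis (no_types, lifting))
      have "z = 0" using G(6) z d0 s0 n unfolding inj_on_def
        by (metis (no_types, lifting) DiffD1 DiffI atLeastLessThan_iff singletonD zero_less_mult_iff
              zero_less_numeral less_le_not_le order_refl)
      thus False using z by simp
    qed
  qed
qed

lemma goodrho_trans:
  assumes n: "n > 0" and g: "goodrho n s \<rho>"
  shows "goodrho n (2*n - s) (\<lambda>y. (\<rho> ((y + s) mod (2*n)) - s) mod (2*n))"
proof -
  note G = goodrhoD[OF g]
  define N where "N = 2*n"
  have N: "N > 0" using n N_def by simp
  define a where "a y = (y + s) mod N" for y
  define \<sigma> where "\<sigma> y = (\<rho> (a y) - s) mod N" for y
  have aR: "a y \<in> {0..<N}" for y using N a_def by simp
  have s: "s \<in> {1..<N}" using G(1) N_def by simp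
  have diff: "(\<sigma> y - y) mod N = (\<rho> (a y) - a y) mod N" for y
  proof -
    have "(\<sigma> y - y) mod N = (\<rho> (a y) - s - y) mod N" unfolding \<sigma>_def by (simp add: mod_diff_left_eq)
    also have "\<dots> = (\<rho> (a y) - (y + s)) mod N" by (simp add: algebra_simps)
    also have "\<dots> = (\<rho> (a y) - a y) mod N" unfolding a_def by (simp add: mod_diff_right_eq)
    finally show ?thesis .
  qed
  have ainj: "y1 = y2" if "y1 \<in> {0..<N}" "y2 \<in> {0..<N}" "a y1 = a y2" for y1 y2
  proof -
    have "N dvd (y1 + s) - (y2 + s)" using that(3) unfolding a_def by (simp add: mod_eq_dvd_iff)
    hence "N dvd y1 - y2" by simp
    hence "y1 mod N = y2 mod N" by (simp add: mod_eq_dvd_iff)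
    thus ?thesis using that by simp
  qed
  have a0: "a y \<noteq> 0" if "y \<in> {0..<N}" "y \<noteq> N - s" for y
  proof
    assume "a y = 0"
    hence "(y + s) mod N = 0" unfolding a_def .
    moreover have "y + s \<in> {1..<2*N}" using that s by auto
    ultimately have "y + s = N"
    proof (cases "y + s < N")
      case True
      hence "(y + s) mod N = y + s" using \<open>y + s \<in> {1..<2*N}\<close> by (intro mod_pos_pos_trivial) auto
      thus ?thesis using \<open>(y + s) mod N = 0\<close> \<open>y + s \<in> {1..<2*N}\<close> by simp
    next
      case False
      have "(y + s) mod N = (y + s - N) mod N" by (simp add: mod_diff_right_eq[symmetric])
      also have "\<dots> = y + s - N" using False \<open>y + s \<in> {1..<2*N}\<close> by (intro mod_pos_pos_trivial) auto
      finally show ?thesis using \<open>(y + s) mod N = 0\<close> by simp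
    qed
    thus False using that by simp
  qed
  have "goodrho n (N - s) \<sigma>"
  unfolding goodrho_def N_def[symmetric]
  proof (intro conjI ballI)
    show "N - s \<in> {1..<N}" using s by auto
    show "\<sigma> y \<in> {0..<N}" if "y \<in> {0..<N}" for y unfolding \<sigma>_def using N by simp
    show "inj_on \<sigma> {0..<N}"
    proof (rule inj_onI)
      fix y1 y2 assume y: "y1 \<in> {0..<N}" "y2 \<in> {0..<N}" "\<sigma> y1 = \<sigma> y2"
      have r: "\<rho> (a y1) \<in> {0..<N}" "\<rho> (a y2) \<in> {0..<N}" using G(2) aR N_def by auto
      have "(\<rho> (a y1) - s) mod N = (\<rho> (a y2) - s) mod N" using y(3) unfolding \<sigma>_def .
      hence "\<rho> (a y1) - s = \<rho> (a y2) - s" by (rule mod_eq_small[OF N]) (use r in auto)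
      hence "a y1 = a y2" using G(3) aR N_def unfolding inj_on_def by auto
      thus "y1 = y2" using ainj y by auto
    qed
    show "\<sigma> 0 = 0" unfolding \<sigma>_def a_def using s G(5) by simp
    have "a (N - s) = 0" unfolding a_def by simp
    hence "\<sigma> (N - s) = (- s) mod N" unfolding \<sigma>_def using G(4) by simp
    also have "\<dots> = (N - s) mod N" by (metis add.commute diff_conv_add_uminus mod_add_self2)
    also have "\<dots> = N - s" using s by (intro mod_pos_pos_trivial) auto
    finally show "\<sigma> (N - s) = N - s" .
    show "inj_on (\<lambda>y. (\<sigma> y - y) mod N) ({0..<N} - {N - s})"
    proof (rule inj_onI)
      fix y1 y2 assume y: "y1 \<in> {0..<N} - {N - s}" "y2 \<in> {0..<N} - {N - s}"
        "(\<sigma> y1 - y1) mod N = (\<sigma> y2 - y2) mod N"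
      have "(\<rho> (a y1) - a y1) mod N = (\<rho> (a y2) - a y2) mod N" using y(3) diff by simp
      moreover have "a y1 \<in> {0..<2*n} - {0}" "a y2 \<in> {0..<2*n} - {0}" using aR a0 y N_def by auto
      ultimately have "a y1 = a y2" using goodrho_inj0[OF g] unfolding inj_on_def N_def by blast
      thus "y1 = y2" using ainj y by auto
    qed
    fix y assume y: "y \<in> {0..<N}"
    show "(\<sigma> y - y) mod N \<noteq> n" using diff G(7)[of "a y"] aR N_def by simp
  qed
  moreover have "\<sigma> = (\<lambda>y. (\<rho> ((y + s) mod (2*n)) - s) mod (2*n))"
    unfolding \<sigma>_def a_def N_def by simp
  ultimately show ?thesis unfolding N_def by simp
qed


lemma goodrho_neg:
  assumes n: "n > 0" and g: "goodrho n s \<rho>"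
  shows "goodrho n (2*n - s) (\<lambda>y. (- \<rho> ((- y) mod (2*n))) mod (2*n))"
proof -
  note G = goodrhoD[OF g]
  define N where "N = 2*n"
  have N: "N > 0" using n N_def by simp
  define b where "b y = (- y) mod N" for y
  define \<sigma> where "\<sigma> y = (- \<rho> (b y)) mod N" for y
  have bR: "b y \<in> {0..<N}" for y using N b_def by simp
  have s: "s \<in> {1..<N}" using G(1) N_def by simp
  have diff: "(\<sigma> y - y) mod N = (- ((\<rho> (b y) - b y) mod N)) mod N" for y
  proof -
    have "(\<sigma> y - y) mod N = (- \<rho> (b y) - y) mod N" unfolding \<sigma>_def by (simp add: mod_diff_left_eq)
    also have "\<dots> = (- \<rho> (b y) - (- (- y))) mod N" by simp
    also have "\<dots> = (- \<rho> (b y) - (- (b y))) mod N" unfolding b_def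
      by (metis mod_diff_right_eq mod_minus_eq)
    also have "\<dots> = (- (\<rho> (b y) - b y)) mod N" by (simp add: algebra_simps)
    also have "\<dots> = (- ((\<rho> (b y) - b y) mod N)) mod N" by (simp add: mod_minus_eq)
    finally show ?thesis .
  qed
  have binj: "y1 = y2" if "y1 \<in> {0..<N}" "y2 \<in> {0..<N}" "b y1 = b y2" for y1 y2
  proof -
    have "N dvd (- y1) - (- y2)" using that(3) unfolding b_def by (simp add: mod_eq_dvd_iff)
    hence "N dvd y1 - y2" by (metis dvd_minus_iff minus_diff_eq diff_minus_eq_add add.commute diff_conv_add_uminus)
    hence "y1 mod N = y2 mod N" by (simp add: mod_eq_dvd_iff)
    thus ?thesis using that by simp
  qed
  have bs: "b y \<noteq> s" if "y \<in> {0..<N}" "y \<noteq> N - s" for y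
  proof
    assume "b y = s"
    hence "b y = b (N - s)" unfolding b_def using s by (simp add: mod_pos_pos_trivial)
    thus False using binj[of y "N - s"] that s by auto
  qed
  have negmod: "(- x) mod N = (- z) mod N \<Longrightarrow> x mod N = z mod N" for x z
    by (metis mod_minus_eq minus_minus)
  have "goodrho n (N - s) \<sigma>"
  unfolding goodrho_def N_def[symmetric]
  proof (intro conjI ballI)
    show "N - s \<in> {1..<N}" using s by auto
    show "\<sigma> y \<in> {0..<N}" if "y \<in> {0..<N}" for y unfolding \<sigma>_def using N by simp
    show "inj_on \<sigma> {0..<N}"
    proof (rule inj_onI)
      fix y1 y2 assume y: "y1 \<in> {0..<N}" "y2 \<in> {0..<N}" "\<sigma> y1 = \<sigma> y2"
      have r: "\<rho> (b y1) \<in> {0..<N}" "\<rho> (b y2) \<in> {0..<N}" using G(2) bR N_def by auto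
      have "\<rho> (b y1) mod N = \<rho> (b y2) mod N" using y(3) negmod unfolding \<sigma>_def by blast
      hence "\<rho> (b y1) = \<rho> (b y2)" using r by simp
      hence "b y1 = b y2" using G(3) bR N_def unfolding inj_on_def by auto
      thus "y1 = y2" using binj y by auto
    qed
    show "\<sigma> 0 = 0" unfolding \<sigma>_def b_def using G(4) by simp
    have "b (N - s) = s" unfolding b_def using s by (simp add: mod_pos_pos_trivial)
    hence "\<sigma> (N - s) = (- s) mod N" unfolding \<sigma>_def using G(5) by simp
    also have "\<dots> = (N - s) mod N" by (metis add.commute diff_conv_add_uminus mod_add_self2)
    also have "\<dots> = N - s" using s by (intro mod_pos_pos_trivial) auto
    finally show "\<sigma> (N - s) = N - s" .
    show "inj_on (\<lambda>y. (\<sigma> y - y) mod N) ({0..<N} - {N - s})"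
    proof (rule inj_onI)
      fix y1 y2 assume y: "y1 \<in> {0..<N} - {N - s}" "y2 \<in> {0..<N} - {N - s}"
        "(\<sigma> y1 - y1) mod N = (\<sigma> y2 - y2) mod N"
      have "((\<rho> (b y1) - b y1) mod N) mod N = ((\<rho> (b y2) - b y2) mod N) mod N"
        using y(3) diff negmod by metis
      hence "(\<rho> (b y1) - b y1) mod N = (\<rho> (b y2) - b y2) mod N" by simp
      moreover have "b y1 \<in> {0..<2*n} - {s}" "b y2 \<in> {0..<2*n} - {s}" using bR bs y N_def by auto
      ultimately have "b y1 = b y2" using G(6) unfolding inj_on_def N_def by blast
      thus "y1 = y2" using binj y by auto
    qed
    fix y assume y: "y \<in> {0..<N}"
    show "(\<sigma> y - y) mod N \<noteq> n"
    proof
      assume "(\<sigma> y - y) mod N = n"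
      hence "(- ((\<rho> (b y) - b y) mod N)) mod N = (- n) mod N"
        using diff N_def n by (simp add: zmod_zminus1_eq_if)
      hence "((\<rho> (b y) - b y) mod N) mod N = n mod N" using negmod by blast
      hence "(\<rho> (b y) - b y) mod N = n" using N_def n by simp
      thus False using G(7)[of "b y"] bR N_def by simp
    qed
  qed
  moreover have "\<sigma> = (\<lambda>y. (- \<rho> ((- y) mod (2*n))) mod (2*n))"
    unfolding \<sigma>_def b_def N_def by simp
  ultimately show ?thesis unfolding N_def by simp
qed

lemma mod_add_cancel_int:
  fixes a b c N :: int
  assumes "(a + c) mod N = (b + c) mod N"
  shows "a mod N = b mod N"
proof -
  have "N dvd (a + c) - (b + c)" using assms by (simp add: mod_eq_dvd_iff)
  hence "N dvd a - b" by simp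
  thus ?thesis by (simp add: mod_eq_dvd_iff)
qed

lemma lift_arith:
  fixes m :: int
  assumes m: "m > 0" "odd m"
    and k_def: "k = (m - 1) div 2"
    and h_def: "h = (k*(k+1)) mod m"
    and F_def: "F = (\<lambda>z::int. ((-4*z) mod m) mod 2)"
  shows "m = 2*k+1" "(2*h) mod m = k mod m"
    "\<And>z. F z \<in> {0,1}" "F 0 = 0"
    "\<And>d. d \<in> {0..<m} \<Longrightarrow> d \<noteq> 0 \<Longrightarrow> F ((d - h) mod m) \<noteq> F d"
    "F (((-k) mod m + h) mod m) = 0"
proof -
  show mk: "m = 2*k+1" using m(2) unfolding k_def by presburger
  have "m dvd h - k*(k+1)" unfolding h_def by (simp only: mod_eq_dvd_iff[symmetric] mod_mod_trivial)
  then obtain q where q: "h - k*(k+1) = m*q" by (auto simp: dvd_def)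
  have h2: "2*h = k + m*(k + 2*q)" using q mk by (simp add: algebra_simps)
  show "(2*h) mod m = k mod m" using h2 by simp
  show "\<And>z. F z \<in> {0,1}" unfolding F_def by auto
  show "F 0 = 0" unfolding F_def by simp
  have odd_dvd4: "d = 0" if "d \<in> {0..<m}" "m dvd 4*d" for d
  proof -
    have "m dvd 2*(2*d)" using that by simp
    hence "m dvd 2*d" using odd_dvd_2 m by blast
    hence "m dvd d" using odd_dvd_2 m by blast
    thus "d = 0" using that by (metis atLeastLessThan_iff zdvd_not_zless le_less)
  qed
  show "F ((d - h) mod m) \<noteq> F d" if d: "d \<in> {0..<m}" "d \<noteq> 0" for d
  proof -
    define J where "J = (-4*d) mod m"
    have J: "J \<in> {0..<m}" unfolding J_def using m by simp
    have J0: "J \<noteq> 0"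
    proof
      assume "J = 0"
      hence "m dvd -4*d" unfolding J_def by (simp add: mod_eq_0_iff_dvd)
      hence "m dvd 4*d" by simp
      thus False using odd_dvd4 d by blast
    qed
    have "(-4*((d - h) mod m)) mod m = (-4*(d - h)) mod m" by (rule mod_mult_right_eq)
    also have "\<dots> = (-4*d - 1) mod m"
    proof -
      have "(-4*(d - h)) - (-4*d - 1) = m*(1 + 2*(k + 2*q))" using h2 mk by (simp add: algebra_simps)
      hence "m dvd (-4*(d - h)) - (-4*d - 1)" by simp
      thus ?thesis by (simp add: mod_eq_dvd_iff)
    qed
    also have "\<dots> = (J - 1) mod m" unfolding J_def by (simp add: mod_diff_left_eq)
    also have "\<dots> = J - 1" using J J0 by (intro mod_pos_pos_trivial) auto
    finally have "F ((d - h) mod m) = (J - 1) mod 2" unfolding F_def by simp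
    moreover have "F d = J mod 2" unfolding F_def J_def by simp
    ultimately show ?thesis by presburger
  qed
  have "(-4*(((-k) mod m + h) mod m)) mod m = (-4*(-k + h)) mod m"
    by (metis mod_add_left_eq mod_mult_right_eq)
  also have "\<dots> = (m - 1) mod m"
  proof -
    have "(-4*(-k + h)) - (m - 1) = m*(-2*(k + 2*q))" using h2 mk by (simp add: algebra_simps)
    hence "m dvd (-4*(-k + h)) - (m - 1)" by simp
    thus ?thesis by (simp only: mod_eq_dvd_iff)
  qed
  also have "\<dots> = m - 1" using m by (intro mod_pos_pos_trivial) auto
  finally show "F (((-k) mod m + h) mod m) = 0" unfolding F_def using m by simp
qed

lemma lift:
  fixes m n s :: int and \<rho> :: "int \<Rightarrow> int"
  assumes m: "m > 0" "odd m" and n: "n > 0" and g: "goodrho n s \<rho>"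
  shows "\<exists>\<psi>. is_delta_perm m n (add_mset (0,0) (mset_set (grp m n - {(0,n)}))) \<psi>
           \<and> \<psi> (0,0) = (0,0)
           \<and> \<psi> ((-((m-1) div 2)) mod m, s) = ((-((m-1) div 2)) mod m, s)"
proof -
  define k where "k = (m-1) div 2"
  define h where "h = (k*(k+1)) mod m"
  define F where "F = (\<lambda>z::int. ((-4*z) mod m) mod 2)"
  have A: "m = 2*k+1" "(2*h) mod m = k mod m"
    "\<And>z. F z \<in> {0,1}" "F 0 = 0"
    "\<And>d. d \<in> {0..<m} \<Longrightarrow> d \<noteq> 0 \<Longrightarrow> F ((d - h) mod m) \<noteq> F d"
    "F (((-k) mod m + h) mod m) = 0"
    using lift_arith[OF m k_def h_def F_def] by auto
  note G = goodrhoD[OF g]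
  define N where "N = 2*n"
  have N: "N > 0" using n N_def by simp
  have s: "s \<in> {1..<N}" using G(1) N_def by simp
  have sN: "s \<in> {0..<N}" using s by simp
  define \<psi> where "\<psi> = (\<lambda>(x::int,y::int). if y = s then ((2*x + k) mod m, (s + n * F ((x + h) mod m)) mod N)
                     else ((2*x) mod m, (\<rho> y + n * F x) mod N))"
  define d where "d = (\<lambda>p. gsub m n (\<psi> p) p)"
  define GG where "GG = grp m n"
  have GG: "GG = {0..<m} \<times> {0..<N}" unfolding GG_def grp_def N_def ..
  have Fb: "F z = 0 \<or> F z = 1" for z using A(3)[of z] by auto
  have psi_n: "\<psi> (x,y) = ((2*x) mod m, (\<rho> y + n*F x) mod N)" if "y \<noteq> s" for x y
    using that unfolding \<psi>_def by simp
  have psi_s: "\<psi> (x,s) = ((2*x+k) mod m, (s + n*F((x+h) mod m)) mod N)" for x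
    unfolding \<psi>_def by simp
  have d_n: "d (x,y) = (x, (\<rho> y - y + n*F x) mod N)" if "x \<in> {0..<m}" "y \<noteq> s" for x y
  proof -
    have "((2*x) mod m - x) mod m = (2*x - x) mod m" by (simp add: mod_diff_left_eq)
    also have "\<dots> = x" using that by simp
    finally have 1: "((2*x) mod m - x) mod m = x" .
    have "((\<rho> y + n*F x) mod N - y) mod N = (\<rho> y - y + n*F x) mod N"
      by (simp add: mod_diff_left_eq algebra_simps)
    thus ?thesis using 1 that unfolding d_def gsub_def N_def by (simp add: psi_n N_def)
  qed
  have d_s: "d (x,s) = ((x+k) mod m, (n*F((x+h) mod m)) mod N)" if "x \<in> {0..<m}" for x
  proof -
    have 1: "((2*x+k) mod m - x) mod m = (x+k) mod m" by (simp add: mod_diff_left_eq algebra_simps)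
    have 2: "((s + n*F((x+h) mod m)) mod N - s) mod N = (n*F((x+h) mod m)) mod N"
      by (simp add: mod_diff_left_eq)
    show ?thesis using 1 2 unfolding d_def gsub_def N_def by (simp add: psi_s N_def)
  qed
  have xinj: "x1 = x2" if "x1 \<in> {0..<m}" "x2 \<in> {0..<m}" "x1 mod m = x2 mod m" for x1 x2
    using that by simp
  have shift: "x1 mod m = (x2 + h) mod m" if "(2*x1) mod m = (2*x2 + k) mod m" for x1 x2
  proof -
    have "(2*x2 + k) mod m = (2*x2 + 2*h) mod m" using A(2) by (metis mod_add_right_eq)
    hence "(2*x1) mod m = (2*(x2+h)) mod m" using that by (simp add: algebra_simps)
    thus ?thesis using cancel2_mod m(2) by blast
  qed
  have rhoR: "\<rho> y \<in> {0..<N}" if "y \<in> {0..<N}" for y using G(2) that N_def by simp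
  have rhoinj: "y1 = y2" if "y1 \<in> {0..<N}" "y2 \<in> {0..<N}" "\<rho> y1 mod N = \<rho> y2 mod N" for y1 y2
  proof -
    have "\<rho> y1 = \<rho> y2" using that rhoR by simp
    thus ?thesis using G(3) that N_def unfolding inj_on_def by auto
  qed
  have psi_GG: "\<psi> p \<in> GG" for p
  proof -
    obtain x y where p: "p = (x,y)" by fastforce
    show ?thesis using m N unfolding p GG by (cases "y = s") (simp_all add: psi_n psi_s)
  qed
  have mixed: "False" if "x1 \<in> {0..<m}" "y1 \<in> {0..<N}" "y1 \<noteq> s" "x2 \<in> {0..<m}"
      "\<psi> (x1,y1) = \<psi> (x2,s)" for x1 y1 x2
  proof -
    have e1: "(2*x1) mod m = (2*x2+k) mod m" and e2: "(\<rho> y1 + n*F x1) mod N = (s + n*F((x2+h) mod m)) mod N"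
      using that(5) by (simp_all add: psi_n[OF that(3)] psi_s)
    have "x1 mod m = (x2 + h) mod m" using shift e1 by blast
    hence "x1 = (x2+h) mod m" using that(1) by simp
    hence "(\<rho> y1 + n*F x1) mod N = (s + n*F x1) mod N" using e2 by simp
    hence "\<rho> y1 mod N = s mod N" by (rule mod_add_cancel_int)
    hence "\<rho> y1 mod N = \<rho> s mod N" using G(5) by simp
    hence "y1 = s" by (rule rhoinj[OF that(2) sN])
    thus False using that by simp
  qed
  have psi_inj: "inj_on \<psi> GG"
  proof (rule inj_onI)
    fix p1 p2 assume p: "p1 \<in> GG" "p2 \<in> GG" "\<psi> p1 = \<psi> p2"
    obtain x1 y1 where p1: "p1 = (x1,y1)" by fastforce
    obtain x2 y2 where p2: "p2 = (x2,y2)" by fastforce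
    have r: "x1 \<in> {0..<m}" "y1 \<in> {0..<N}" "x2 \<in> {0..<m}" "y2 \<in> {0..<N}" using p p1 p2 GG by auto
    show "p1 = p2"
    proof (cases "y1 = s")
      case True note T1 = True
      show ?thesis
      proof (cases "y2 = s")
        case True
        have "(2*x1+k) mod m = (2*x2+k) mod m" using p(3) T1 True p1 p2 by (simp add: psi_s)
        hence "(2*x1) mod m = (2*x2) mod m" by (rule mod_add_cancel_int)
        hence "x1 mod m = x2 mod m" by (rule cancel2_mod[OF m(2)])
        hence "x1 = x2" using r by simp
        thus ?thesis using p1 p2 T1 True by simp
      next
        case False
        thus ?thesis using mixed[of x2 y2 x1] p(3) p1 p2 T1 r by simp
      qed
    next
      case False note F1 = False
      show ?thesis
      proof (cases "y2 = s")
        case True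
        thus ?thesis using mixed[of x1 y1 x2] p(3) p1 p2 F1 r by simp
      next
        case False
        have e: "(2*x1) mod m = (2*x2) mod m" "(\<rho> y1 + n*F x1) mod N = (\<rho> y2 + n*F x2) mod N"
          using p(3) p1 p2 F1 False by (simp_all add: psi_n)
        have "x1 = x2" using cancel2_mod[OF m(2) e(1)] r by simp
        hence "\<rho> y1 mod N = \<rho> y2 mod N" using e(2) mod_add_cancel_int by blast
        hence "y1 = y2" using rhoinj r by blast
        thus ?thesis using p1 p2 \<open>x1 = x2\<close> by simp
      qed
    qed
  qed
  have bij: "bij_betw \<psi> GG GG"
  proof -
    have fin: "finite GG" unfolding GG by simp
    have "\<psi> ` GG \<subseteq> GG" using psi_GG by auto
    hence "\<psi> ` GG = GG" using endo_inj_surj[OF fin _ psi_inj] by simp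
    thus ?thesis using psi_inj unfolding bij_betw_def by simp
  qed
  have emod: "e = 0 \<and> a = b" if "(e + n*a) mod N = (n*b) mod N" "a \<in> {0,1}" "b \<in> {0,1}"
     "e \<in> {0..<N}" "e \<noteq> n" for e a b
  proof -
    have nN: "n < N" using N_def n by simp
    have ab: "a = 0 \<or> a = 1" "b = 0 \<or> b = 1" using that(2,3) by simp_all
    consider "a = 0" "b = 0" | "a = 1" "b = 1" | "a = 0" "b = 1" | "a = 1" "b = 0" using ab by blast
    thus ?thesis
    proof cases
      case 1 thus ?thesis using that by simp
    next
      case 2
      hence "e mod N = 0 mod N" using that(1) mod_add_cancel_int[of e n N 0] by simp
      thus ?thesis using that 2 by simp
    next
      case 3
      hence "e mod N = n mod N" using that(1) by simp
      thus ?thesis using that nN n by simp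
    next
      case 4
      hence eq: "(e + n) mod N = 0" using that(1) by simp
      show ?thesis
      proof (cases "e + n < N")
        case True
        hence "(e + n) mod N = e + n" using that(4) n by (intro mod_pos_pos_trivial) auto
        thus ?thesis using eq that n by simp
      next
        case False
        have "(e + n) mod N = (e + n - N) mod N" by (simp add: mod_diff_right_eq[symmetric])
        also have "\<dots> = e + n - N" using False that(4) nN by (intro mod_pos_pos_trivial) auto
        finally have "e = N - n" using eq by simp
        thus ?thesis using that N_def by simp
      qed
    qed
  qed
  have dmixed: "False" if "x1 \<in> {0..<m}" "y1 \<in> {0..<N}" "y1 \<noteq> s" "(x1,y1) \<noteq> (0,0)" "x2 \<in> {0..<m}"
      "d (x1,y1) = d (x2,s)" for x1 y1 x2
  proof -
    have e12: "x1 = (x2+k) mod m \<and> (\<rho> y1 - y1 + n*F x1) mod N = (n*F((x2+h) mod m)) mod N"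
      using that(6) unfolding d_n[OF that(1,3)] d_s[OF that(5)] prod.inject by blast
    hence e1: "x1 = (x2+k) mod m" and e2: "(\<rho> y1 - y1 + n*F x1) mod N = (n*F((x2+h) mod m)) mod N"
      by blast+
    define e where "e = (\<rho> y1 - y1) mod N"
    have "(e + n*F x1) mod N = (n*F((x2+h) mod m)) mod N" using e2 unfolding e_def by (simp add: mod_add_left_eq)
    moreover have "e \<in> {0..<N}" unfolding e_def using N by simp
    moreover have "e \<noteq> n" unfolding e_def using G(7) that(2) N_def by simp
    ultimately have ee: "e = 0" "F x1 = F((x2+h) mod m)" using emod A(3) by blast+
    have "(\<rho> y1 - y1) mod (2*n) = (\<rho> 0 - 0) mod (2*n)" using ee(1) G(4) unfolding e_def N_def by simp
    moreover have "y1 \<in> {0..<2*n} - {s}" "0 \<in> {0..<2*n} - {s}" using that(2,3) s N_def by auto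
    ultimately have y10: "y1 = 0" using G(6) unfolding inj_on_def by blast
    have "x1 mod m = (x2+k) mod m" using e1 by simp
    hence "m dvd x1 - (x2+k)" by (simp only: mod_eq_dvd_iff)
    moreover have "k mod m = (2*h) mod m" using A(2) by simp
    hence "m dvd k - 2*h" by (simp only: mod_eq_dvd_iff)
    ultimately have "m dvd (x1 - (x2+k)) + (k - 2*h)" by (rule dvd_add)
    hence "m dvd (x1 - h) - (x2 + h)" by (simp add: algebra_simps)
    hence "(x1 - h) mod m = (x2 + h) mod m" by (simp add: mod_eq_dvd_iff)
    hence "F ((x1 - h) mod m) = F x1" using ee(2) by simp
    hence "x1 = 0" using A(5) that(1) by blast
    thus False using y10 that(4) by simp
  qed
  have d_inj: "inj_on d (GG - {(0,0)})"
  proof (rule inj_onI)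
    fix p1 p2 assume p: "p1 \<in> GG - {(0,0)}" "p2 \<in> GG - {(0,0)}" "d p1 = d p2"
    obtain x1 y1 where p1: "p1 = (x1,y1)" by fastforce
    obtain x2 y2 where p2: "p2 = (x2,y2)" by fastforce
    have r: "x1 \<in> {0..<m}" "y1 \<in> {0..<N}" "x2 \<in> {0..<m}" "y2 \<in> {0..<N}" "(x1,y1) \<noteq> (0,0)" "(x2,y2) \<noteq> (0,0)"
      using p p1 p2 GG by auto
    show "p1 = p2"
    proof (cases "y1 = s")
      case True note T1 = True
      show ?thesis
      proof (cases "y2 = s")
        case True
        have "(x1+k) mod m = (x2+k) mod m" using p(3) T1 True p1 p2 r by (simp add: d_s)
        hence "x1 mod m = x2 mod m" by (rule mod_add_cancel_int)
        hence "x1 = x2" using r by simp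
        thus ?thesis using p1 p2 T1 True by simp
      next
        case False
        thus ?thesis using dmixed[of x2 y2 x1] p(3) p1 p2 T1 r by simp
      qed
    next
      case False note F1 = False
      show ?thesis
      proof (cases "y2 = s")
        case True
        thus ?thesis using dmixed[of x1 y1 x2] p(3) p1 p2 F1 r by simp
      next
        case False
        have "d (x1,y1) = d (x2,y2)" using p(3) p1 p2 by simp
        hence "x1 = x2 \<and> (\<rho> y1 - y1 + n*F x1) mod N = (\<rho> y2 - y2 + n*F x2) mod N"
          unfolding d_n[OF r(1) F1] d_n[OF r(3) False] prod.inject .
        hence e: "x1 = x2" "(\<rho> y1 - y1 + n*F x1) mod N = (\<rho> y2 - y2 + n*F x2) mod N" by blast+
        from e(1) e(2) have "(\<rho> y1 - y1 + n*F x1) mod N = (\<rho> y2 - y2 + n*F x1) mod N" by simp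
        hence "(\<rho> y1 - y1) mod (2*n) = (\<rho> y2 - y2) mod (2*n)" using mod_add_cancel_int N_def by metis
        moreover have "y1 \<in> {0..<2*n} - {s}" "y2 \<in> {0..<2*n} - {s}" using r F1 False N_def by auto
        ultimately have "y1 = y2" using G(6) unfolding inj_on_def by blast
        thus ?thesis using p1 p2 e(1) by simp
      qed
    qed
  qed
  have d_GG: "d p \<in> GG - {(0,n)}" if "p \<in> GG - {(0,0)}" for p
  proof -
    obtain x y where p: "p = (x,y)" by fastforce
    have r: "x \<in> {0..<m}" "y \<in> {0..<N}" "(x,y) \<noteq> (0,0)" using that p GG by auto
    show ?thesis
    proof (cases "y = s")
      case True
      have dd: "d p = ((x+k) mod m, (n*F((x+h) mod m)) mod N)" using p True d_s r by simp
      have "d p \<noteq> (0,n)"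
      proof
        assume "d p = (0,n)"
        hence a: "(x+k) mod m = 0" "(n*F((x+h) mod m)) mod N = n" using dd by auto
        have "m dvd x - (-k)" using a(1) by (simp add: mod_eq_0_iff_dvd)
        hence "x mod m = (-k) mod m" by (simp add: mod_eq_dvd_iff)
        hence "x = (-k) mod m" using r by simp
        hence "F((x+h) mod m) = 0" using A(6) by simp
        thus False using a(2) n by simp
      qed
      thus ?thesis using dd m N unfolding GG by auto
    next
      case False
      have dd: "d p = (x, (\<rho> y - y + n*F x) mod N)" using p False d_n r by simp
      have "d p \<noteq> (0,n)"
      proof
        assume "d p = (0,n)"
        hence a: "x = 0" "(\<rho> y - y + n*F x) mod N = n" using dd by auto
        hence "(\<rho> y - y) mod (2*n) = n" using A(4) N_def by simp
        thus False using G(7) r N_def by simp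
      qed
      thus ?thesis using dd r N unfolding GG by auto
    qed
  qed
  have s0: "s \<noteq> 0" using s by simp
  have d00: "d (0,0) = (0,0)" using d_n[of 0 0] s0 m G(4) A(4) by simp
  have fin: "finite GG" unfolding GG by simp
  have in00: "(0,0) \<in> GG" and in0n: "(0,n) \<in> GG" using m N N_def n unfolding GG by auto
  have img: "d ` (GG - {(0,0)}) = GG - {(0,n)}"
  proof (rule card_subset_eq)
    show "finite (GG - {(0,n)})" using fin by simp
    show "d ` (GG - {(0,0)}) \<subseteq> GG - {(0,n)}" by (rule image_subsetI, rule d_GG)
    have "card (d ` (GG - {(0,0)})) = card (GG - {(0,0)})" by (rule card_image[OF d_inj])
    also have "\<dots> = card GG - 1" using fin in00 by simp
    also have "\<dots> = card (GG - {(0,n)})" using fin in0n by simp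
    finally show "card (d ` (GG - {(0,0)})) = card (GG - {(0,n)})" .
  qed
  have ms: "image_mset d (mset_set GG) = add_mset (0,0) (mset_set (GG - {(0,n)}))"
  proof -
    have "mset_set GG = add_mset (0,0) (mset_set (GG - {(0,0)}))" using mset_set.remove[OF fin in00] .
    hence "image_mset d (mset_set GG) = add_mset (d (0,0)) (image_mset d (mset_set (GG - {(0,0)})))" by simp
    also have "image_mset d (mset_set (GG - {(0,0)})) = mset_set (d ` (GG - {(0,0)}))"
      by (rule image_mset_mset_set[OF d_inj])
    finally show ?thesis using img d00 by simp
  qed
  have s0': "(0::int) \<noteq> s" using s0 by simp
  have fix1: "\<psi> (0,0) = (0,0)" using psi_n[OF s0', of 0] G(4) A(4) by simp
  have fix2: "\<psi> ((-k) mod m, s) = ((-k) mod m, s)"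
  proof -
    define x where "x = (-k) mod m"
    have "x mod m = (-k) mod m" unfolding x_def by simp
    hence "m dvd x - (-k)" by (simp only: mod_eq_dvd_iff)
    hence "m dvd (2*x + k) - x" by (simp add: algebra_simps)
    hence "(2*x+k) mod m = x mod m" by (simp only: mod_eq_dvd_iff)
    hence 1: "(2*x+k) mod m = x" unfolding x_def by simp
    have 2: "F ((x+h) mod m) = 0" using A(6) unfolding x_def .
    show ?thesis using psi_s[of x] 1 2 s unfolding x_def by simp
  qed
  show ?thesis
    using bij ms fix1 fix2 unfolding is_delta_perm_def GG_def d_def k_def by blast
qed

lemma n1_case:
  fixes m :: int
  assumes m: "m > 0" "odd m"
  shows "\<exists>\<psi>. is_delta_perm m 1 (add_mset (0,0) (mset_set (grp m 1 - {(0,1)}))) \<psi>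
           \<and> \<psi> (0,0) = (0,0)
           \<and> \<psi> ((-((m-1) div 2)) mod m, (1 + (m-1) div 2) mod 2) = ((-((m-1) div 2)) mod m, (1 + (m-1) div 2) mod 2)"
proof -
  define k where "k = (m-1) div 2"
  have mk: "m = 2*k+1" using m(2) unfolding k_def by presburger
  define \<psi> where "\<psi> = (\<lambda>(x::int,y::int). if x = 0 then (y mod m, y) else if even (x+y) then ((m+1-x) mod m, x mod 2)
                     else (m - x, x mod 2))"
  define d where "d = (\<lambda>p. gsub m 1 (\<psi> p) p)"
  define GG where "GG = grp m 1"
  have GG: "GG = {0..<m} \<times> {0..<2}" unfolding GG_def grp_def by simp
  have notdvd: "False" if "x \<in> {1..<m}" "m dvd x" for x
    using that by (metis atLeastLessThan_iff zdvd_not_zless less_le_trans zero_less_one)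
  have notdvd2: "False" if "x \<in> {1..<m}" "m dvd 2*x" for x
    using notdvd[OF that(1)] odd_dvd_2[OF m(2) that(2)] by blast
  have pZ: "\<psi> (0,y) = (y mod m, y)" for y unfolding \<psi>_def by simp
  have pE: "\<psi> (x,y) = ((m+1-x) mod m, x mod 2)" if "x \<noteq> 0" "even (x+y)" for x y
    using that unfolding \<psi>_def by simp
  have pO: "\<psi> (x,y) = (m - x, x mod 2)" if "x \<noteq> 0" "odd (x+y)" for x y
    using that unfolding \<psi>_def by simp
  have dZ: "d (0,y) = (y mod m, 0)" for y unfolding d_def gsub_def using pZ by simp
  have dE: "d (x,y) = ((1-2*x) mod m, 0)" if "x \<noteq> 0" "even (x+y)" for x y
  proof -
    have "((m+1-x) mod m - x) mod m = (m+1-x-x) mod m" by (simp add: mod_diff_left_eq)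
    also have "\<dots> = (1-2*x + m) mod m" by (simp add: algebra_simps)
    also have "\<dots> = (1-2*x) mod m" by simp
    finally have 1: "((m+1-x) mod m - x) mod m = (1-2*x) mod m" .
    have 2: "(x mod 2 - y) mod 2 = 0" using that(2) by presburger
    show ?thesis unfolding d_def gsub_def using pE[OF that] 1 2 by simp
  qed
  have dO: "d (x,y) = ((-2*x) mod m, 1)" if "x \<noteq> 0" "odd (x+y)" "y \<in> {0..<2}" for x y
  proof -
    have 1: "(m - x - x) mod m = (-2*x) mod m"
    proof -
      have "(m - x - x) = (-2*x) + m" by simp
      thus ?thesis by (metis mod_add_self2)
    qed
    have 2: "(x mod 2 - y) mod 2 = 1" using that(2,3) by presburger
    show ?thesis unfolding d_def gsub_def using pO[OF that(1,2)] 1 2 by simp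
  qed
  have psi_GG: "\<psi> p \<in> GG" if "p \<in> GG" for p
  proof -
    obtain x y where p: "p = (x,y)" by fastforce
    have r: "x \<in> {0..<m}" "y \<in> {0..<2}" using that p GG by auto
    show ?thesis
    proof (cases "x = 0")
      case True thus ?thesis using p r m unfolding GG by (simp add: pZ)
    next
      case False
      show ?thesis
      proof (cases "even (x+y)")
        case True thus ?thesis using p r m False unfolding GG by (simp add: pE)
      next
        case F2: False thus ?thesis using p r m False unfolding GG by (simp add: pO)
      qed
    qed
  qed
  have y01: "y = 0 \<or> y = 1" if "y \<in> {0..<2::int}" for y using that by auto
  have dvd_small: "a = b" if "m dvd a - b" "\<bar>a - b\<bar> < m" for a b
    using mod_eq_small[of m a b] that m by (simp add: mod_eq_dvd_iff)
  have psi_inj: "inj_on \<psi> GG"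
  proof (rule inj_onI)
    fix p1 p2 assume p: "p1 \<in> GG" "p2 \<in> GG" "\<psi> p1 = \<psi> p2"
    obtain x1 y1 where p1: "p1 = (x1,y1)" by fastforce
    obtain x2 y2 where p2: "p2 = (x2,y2)" by fastforce
    have r: "x1 \<in> {0..<m}" "y1 \<in> {0..<2}" "x2 \<in> {0..<m}" "y2 \<in> {0..<2}" using p p1 p2 GG by auto
    have eq: "\<psi> (x1,y1) = \<psi> (x2,y2)" using p p1 p2 by simp
    have ZE: "False" if "x \<in> {1..<m}" "even (x+y)" "y \<in> {0..<2}" "y' \<in> {0..<2}" "\<psi> (0,y') = \<psi> (x,y)" for x y y'
    proof -
      have a: "y' mod m = (m+1-x) mod m" "y' = x mod 2" using that(5) pZ pE[of x y] that(1,2) by auto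
      have "m dvd y' - (m+1-x)" using a(1) by (simp only: mod_eq_dvd_iff)
      hence "m dvd (x + y' - 1) - m" by (simp add: algebra_simps)
      hence "m dvd (x + y' - 1) - m + m" using dvd_add dvd_refl by blast
      hence d: "m dvd x + y' - 1" by simp
      show False
      proof (cases "x + y' - 1 = 0")
        case True
        hence "x = 1" "y' = 0" using that by auto
        thus False using a(2) by simp
      next
        case False
        thus False using notdvd[of "x + y' - 1"] d that y01[OF that(4)] by auto
      qed
    qed
    have ZO: "False" if "x \<in> {1..<m}" "odd (x+y)" "y' \<in> {0..<2}" "\<psi> (0,y') = \<psi> (x,y)" for x y y'
    proof -
      have a: "y' mod m = m - x" "y' = x mod 2" using that(4) pZ pO[of x y] that(1,2) by auto
      show False
      proof (cases "y' = 0")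
        case True thus False using a that by simp
      next
        case False
        hence y1: "y' = 1" using y01[OF that(3)] by simp
        hence m1: "m \<noteq> 1" using that(1) by auto
        hence "1 mod m = 1" using m mk by simp
        hence "x = m - 1" using a y1 by simp
        hence "x mod 2 = 0" using mk by presburger
        thus False using a y1 by simp
      qed
    qed
    have EO: "False" if "x \<in> {1..<m}" "even (x+y)" "x' \<in> {1..<m}" "odd (x'+y')" "\<psi> (x,y) = \<psi> (x',y')" for x y x' y'
    proof -
      have a: "(m+1-x) mod m = (m - x') mod m" "x mod 2 = x' mod 2"
        using that(5) pE[of x y] pO[of x' y'] that(1-4) by auto
      have "m dvd (m+1-x) - (m - x')" using a(1) by (simp only: mod_eq_dvd_iff)
      hence "(m+1-x) = (m - x')" by (rule dvd_small) (use that in auto)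
      hence "x' = x - 1" by simp
      thus False using a(2) by presburger
    qed
    show "p1 = p2"
    proof (cases "x1 = 0")
      case T1: True
      show ?thesis
      proof (cases "x2 = 0")
        case True thus ?thesis using T1 eq p1 p2 pZ by simp
      next
        case False
        hence x2: "x2 \<in> {1..<m}" using r by auto
        show ?thesis
        proof (cases "even (x2+y2)")
          case True thus ?thesis using ZE[OF x2 True r(4) r(2)] eq T1 by simp
        next
          case False thus ?thesis using ZO[OF x2 False r(2)] eq T1 by simp
        qed
      qed
    next
      case F1: False
      hence x1: "x1 \<in> {1..<m}" using r by auto
      show ?thesis
      proof (cases "x2 = 0")
        case T2: True
        show ?thesis
        proof (cases "even (x1+y1)")
          case True thus ?thesis using ZE[OF x1 True r(2) r(4)] eq T2 by simp
        next
          case False thus ?thesis using ZO[OF x1 False r(4)] eq T2 by simp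
        qed
      next
        case F2: False
        hence x2: "x2 \<in> {1..<m}" using r by auto
        show ?thesis
        proof (cases "even (x1+y1)")
          case E1: True
          show ?thesis
          proof (cases "even (x2+y2)")
            case E2: True
            have a: "(m+1-x1) mod m = (m+1-x2) mod m" "x1 mod 2 = x2 mod 2"
              using eq pE[OF F1 E1] pE[OF F2 E2] by auto
            have "m dvd (m+1-x1) - (m+1-x2)" using a(1) by (simp only: mod_eq_dvd_iff)
            hence "(m+1-x1) = (m+1-x2)" by (rule dvd_small) (use x1 x2 in auto)
            hence "x1 = x2" by simp
            moreover hence "y1 = y2" using E1 E2 r(2,4) unfolding atLeastLessThan_iff by presburger
            ultimately show ?thesis using p1 p2 by simp
          next
            case O2: False
            thus ?thesis using EO[OF x1 E1 x2 O2] eq by simp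
          qed
        next
          case O1: False
          show ?thesis
          proof (cases "even (x2+y2)")
            case E2: True
            thus ?thesis using EO[OF x2 E2 x1 O1] eq by simp
          next
            case O2: False
            have "m - x1 = m - x2" using eq pO[OF F1 O1] pO[OF F2 O2] by auto
            hence "x1 = x2" by simp
            moreover hence "y1 = y2" using O1 O2 r(2,4) unfolding atLeastLessThan_iff by presburger
            ultimately show ?thesis using p1 p2 by simp
          qed
        qed
      qed
    qed
  qed
  have bij: "bij_betw \<psi> GG GG"
  proof -
    have fin: "finite GG" unfolding GG by simp
    have "\<psi> ` GG \<subseteq> GG" using psi_GG by auto
    hence "\<psi> ` GG = GG" using endo_inj_surj[OF fin _ psi_inj] by simp
    thus ?thesis using psi_inj unfolding bij_betw_def by simp
  qed
  have cls: "(x = 0 \<and> y = 1) \<or> (x \<in> {1..<m} \<and> even (x+y)) \<or> (x \<in> {1..<m} \<and> odd (x+y))"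
    if "(x,y) \<in> GG - {(0,0)}" for x y
    using that y01 unfolding GG by auto
  have d_inj: "inj_on d (GG - {(0,0)})"
  proof (rule inj_onI)
    fix p1 p2 assume p: "p1 \<in> GG - {(0,0)}" "p2 \<in> GG - {(0,0)}" "d p1 = d p2"
    obtain x1 y1 where p1: "p1 = (x1,y1)" by fastforce
    obtain x2 y2 where p2: "p2 = (x2,y2)" by fastforce
    have r: "y1 \<in> {0..<2}" "y2 \<in> {0..<2}" using p p1 p2 GG by auto
    have eq: "d (x1,y1) = d (x2,y2)" using p p1 p2 by simp
    have c1: "(x1 = 0 \<and> y1 = 1) \<or> (x1 \<in> {1..<m} \<and> even (x1+y1)) \<or> (x1 \<in> {1..<m} \<and> odd (x1+y1))"
      using cls p(1) p1 by simp
    have c2: "(x2 = 0 \<and> y2 = 1) \<or> (x2 \<in> {1..<m} \<and> even (x2+y2)) \<or> (x2 \<in> {1..<m} \<and> odd (x2+y2))"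
      using cls p(2) p2 by simp
    have ZE: "False" if "x \<in> {1..<m}" "even (x+y)" "d (0,1) = d (x,y)" for x y
    proof -
      have "1 mod m = (1 - 2*x) mod m" using that dZ dE[of x y] by auto
      hence "m dvd 1 - (1 - 2*x)" by (simp only: mod_eq_dvd_iff)
      hence "m dvd 2*x" by simp
      thus False using notdvd2 that(1) by blast
    qed
    have dd: "x = x'" if "x \<in> {1..<m}" "x' \<in> {1..<m}" "m dvd 2*x - 2*x'" for x x'
    proof -
      have "m dvd 2*(x - x')" using that(3) by (simp add: algebra_simps)
      hence "m dvd x - x'" using odd_dvd_2 m(2) by blast
      thus ?thesis by (rule dvd_small) (use that in auto)
    qed
    show "p1 = p2"
      using c1 c2
    proof (elim disjE conjE)
      assume "x1 = 0" "y1 = 1" "x2 = 0" "y2 = 1" thus ?thesis using p1 p2 by simp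
    next
      assume a: "x1 = 0" "y1 = 1" "x2 \<in> {1..<m}" "even (x2+y2)"
      thus ?thesis using ZE[OF a(3,4)] eq by simp
    next
      assume a: "x1 = 0" "y1 = 1" "x2 \<in> {1..<m}" "odd (x2+y2)"
      thus ?thesis using eq dZ dO[of x2 y2] r by auto
    next
      assume a: "x2 = 0" "y2 = 1" "x1 \<in> {1..<m}" "even (x1+y1)"
      thus ?thesis using ZE[OF a(3,4)] eq by simp
    next
      assume a: "x2 = 0" "y2 = 1" "x1 \<in> {1..<m}" "odd (x1+y1)"
      thus ?thesis using eq dZ dO[of x1 y1] r by auto
    next
      assume a: "x1 \<in> {1..<m}" "even (x1+y1)" "x2 \<in> {1..<m}" "even (x2+y2)"
      hence "(1 - 2*x1) mod m = (1 - 2*x2) mod m" using eq dE by auto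
      hence "m dvd (1 - 2*x1) - (1 - 2*x2)" by (simp only: mod_eq_dvd_iff)
      hence "m dvd 2*x2 - 2*x1" by (simp add: algebra_simps)
      hence "x2 = x1" using dd a by blast
      moreover hence "y1 = y2" using a r unfolding atLeastLessThan_iff by presburger
      ultimately show ?thesis using p1 p2 by simp
    next
      assume a: "x1 \<in> {1..<m}" "even (x1+y1)" "x2 \<in> {1..<m}" "odd (x2+y2)"
      thus ?thesis using eq dE dO r by auto
    next
      assume a: "x1 \<in> {1..<m}" "odd (x1+y1)" "x2 \<in> {1..<m}" "even (x2+y2)"
      thus ?thesis using eq dE dO r by auto
    next
      assume a: "x1 \<in> {1..<m}" "odd (x1+y1)" "x2 \<in> {1..<m}" "odd (x2+y2)"
      hence "(-2*x1) mod m = (-2*x2) mod m" using eq dO r by auto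
      hence "m dvd (-2*x1) - (-2*x2)" by (simp only: mod_eq_dvd_iff)
      hence "m dvd 2*x2 - 2*x1" by (simp add: algebra_simps)
      hence "x2 = x1" using dd a by blast
      moreover hence "y1 = y2" using a r unfolding atLeastLessThan_iff by presburger
      ultimately show ?thesis using p1 p2 by simp
    qed
  qed
  have d_GG: "d p \<in> GG - {(0,1)}" if "p \<in> GG - {(0,0)}" for p
  proof -
    obtain x y where p: "p = (x,y)" by fastforce
    have r: "y \<in> {0..<2}" using that p GG by auto
    have c: "(x = 0 \<and> y = 1) \<or> (x \<in> {1..<m} \<and> even (x+y)) \<or> (x \<in> {1..<m} \<and> odd (x+y))"
      using cls that p by simp
    thus ?thesis
    proof (elim disjE conjE)
      assume "x = 0" "y = 1" thus ?thesis using p dZ m unfolding GG by simp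
    next
      assume "x \<in> {1..<m}" "even (x+y)" thus ?thesis using p dE m unfolding GG by simp
    next
      assume a: "x \<in> {1..<m}" "odd (x+y)"
      have "(-2*x) mod m \<noteq> 0"
      proof
        assume "(-2*x) mod m = 0"
        hence "m dvd -2*x" by (simp add: mod_eq_0_iff_dvd)
        hence "m dvd 2*x" by (metis dvd_minus_iff mult_minus_left)
        thus False using notdvd2 a by blast
      qed
      thus ?thesis using p dO[of x y] a r m unfolding GG by auto
    qed
  qed
  have d00: "d (0,0) = (0,0)" using dZ by simp
  have fin: "finite GG" unfolding GG by simp
  have in00: "(0,0) \<in> GG" and in01: "(0,1) \<in> GG" using m unfolding GG by auto
  have img: "d ` (GG - {(0,0)}) = GG - {(0,1)}"
  proof (rule card_subset_eq)
    show "finite (GG - {(0,1)})" using fin by simp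
    show "d ` (GG - {(0,0)}) \<subseteq> GG - {(0,1)}" by (rule image_subsetI, rule d_GG)
    have "card (d ` (GG - {(0,0)})) = card (GG - {(0,0)})" by (rule card_image[OF d_inj])
    also have "\<dots> = card GG - 1" using fin in00 by simp
    also have "\<dots> = card (GG - {(0,1)})" using fin in01 by simp
    finally show "card (d ` (GG - {(0,0)})) = card (GG - {(0,1)})" .
  qed
  have ms: "image_mset d (mset_set GG) = add_mset (0,0) (mset_set (GG - {(0,1)}))"
  proof -
    have "mset_set GG = add_mset (0,0) (mset_set (GG - {(0,0)}))" using mset_set.remove[OF fin in00] .
    hence "image_mset d (mset_set GG) = add_mset (d (0,0)) (image_mset d (mset_set (GG - {(0,0)})))" by simp
    also have "image_mset d (mset_set (GG - {(0,0)})) = mset_set (d ` (GG - {(0,0)}))"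
      by (rule image_mset_mset_set[OF d_inj])
    finally show ?thesis using img d00 by simp
  qed
  have fix1: "\<psi> (0,0) = (0,0)" using pZ by simp
  have fix2: "\<psi> ((-k) mod m, (1 + k) mod 2) = ((-k) mod m, (1 + k) mod 2)"
  proof (cases "k = 0")
    case True
    hence "m = 1" using mk by simp
    thus ?thesis using True pZ by simp
  next
    case False
    hence kp: "k \<ge> 1" using mk m by simp
    have "(-k) mod m = (-k + m) mod m" by simp
    also have "\<dots> = -k + m" using mk kp by (intro mod_pos_pos_trivial) auto
    also have "\<dots> = k + 1" using mk by simp
    finally have x: "(-k) mod m = k + 1" .
    have ev: "even (k + 1 + (1 + k) mod 2)" by presburger
    have "\<psi> (k+1, (1+k) mod 2) = ((m + 1 - (k+1)) mod m, (k+1) mod 2)" using pE[OF _ ev] kp by simp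
    also have "(m + 1 - (k+1)) mod m = k + 1" using mk kp by simp
    finally show ?thesis using x by (simp add: add.commute)
  qed
  show ?thesis
    using bij ms fix1 fix2 unfolding is_delta_perm_def GG_def d_def k_def by blast
qed

theorem mainTheorem2:
  fixes m n :: int
  assumes "m > 0" and "n > 0" and "odd m"
  shows "\<exists>\<psi>. is_delta_perm m n
              (add_mset (0, 0) (mset_set (grp m n - {(0, n)}))) \<psi>
            \<and> \<psi> (0, 0) = (0, 0)
            \<and> \<psi> ((- ((m - 1) div 2)) mod m, ((n + 1) div 2 + ((m - 1) div 2) * n) mod (2 * n))
               = ((- ((m - 1) div 2)) mod m, ((n + 1) div 2 + ((m - 1) div 2) * n) mod (2 * n))"
proof (cases "n = 1")
  case True
  have "((1 + 1) div 2 + ((m - 1) div 2) * 1) mod (2 * 1) = (1 + (m-1) div 2) mod (2::int)" by simp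
  thus ?thesis using n1_case[OF assms(1,3)] True by simp
next
  case False
  hence n2: "n \<ge> 2" using assms(2) by simp
  define k where "k = (m - 1) div 2"
  define s0 where "s0 = (n + 1) div 2"
  have s0b: "n \<le> 2*s0" "2*s0 \<le> n+1" unfolding s0_def by presburger+
  have "\<exists>\<rho>. goodrho n ((s0 + k * n) mod (2 * n)) \<rho>"
  proof (cases "even k")
    case True
    then obtain j where j: "k = 2*j" by blast
    have e: "s0 + k*n = s0 + j*(2*n)" using j by (simp add: algebra_simps)
    have "(s0 + k * n) mod (2 * n) = s0 mod (2*n)" unfolding e by (rule mod_mult_self1)
    also have "\<dots> = s0" using s0b n2 by (intro mod_pos_pos_trivial) auto
    finally show ?thesis using goodrho_R[OF n2 s0b] by auto
  next
    case False
    then obtain j where j: "k = 2*j+1" by (metis oddE)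
    have e: "s0 + k*n = (s0 + n) + j*(2*n)" using j by (simp add: algebra_simps)
    have "(s0 + k * n) mod (2 * n) = (s0 + n) mod (2*n)" unfolding e by (rule mod_mult_self1)
    also have "\<dots> = s0 + n" using s0b n2 by (intro mod_pos_pos_trivial) auto
    finally have sv: "(s0 + k * n) mod (2 * n) = s0 + n" .
    show ?thesis
    proof (cases "even n")
      case True
      have "2*n - s0 = s0 + n" using True s0b by presburger
      thus ?thesis using goodrho_neg[OF _ goodrho_R[OF n2 s0b]] n2 sv by auto
    next
      case False
      then obtain t where t: "n = 2*t+1" by (metis oddE)
      have t1: "t \<ge> 1" using t n2 by simp
      have g: "goodrho n (2*n - t) (\<lambda>y. (rhoT t ((y + t) mod (2*n)) - t) mod (2*n))"
        using goodrho_trans[OF _ goodrho_T[OF t1]] t t1 by simp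
      have "2*n - t = s0 + n" using t s0b by presburger
      thus ?thesis using g sv by auto
    qed
  qed
  then obtain \<rho> where "goodrho n ((s0 + k * n) mod (2 * n)) \<rho>" by blast
  from lift[OF assms(1,3,2) this] show ?thesis unfolding s0_def k_def .
qed

end
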